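(* Let $E$ be a Hilbert space and $\Omega$ the set of positive definite bounded operators on $E$ with the Thompson metric $d$. For each $n\in\mathbb{N}$ there exists $\rho_n$ with $0<\rho_n<1$ such that the arithmetic mean $A(X,Y)=(X+Y)/2$ and the harmonic mean $H(X,Y)=2(X^{-1}+Y^{-1})^{-1}$ are coordinatewise $\rho_n$-contractive and nonexpansive on the order interval $[(1/n)I,nI]\subseteq\Omega$.
   Context: Loewner order: $A\le B$ iff $B-A$ is positive semidefinite; $[A,B]=\{X:A\le X\le B\}$; $I$ is the identity operator. Thompson metric: $d(A,B)=\max\{\log M(A/B),\log M(B/A)\}$ with $M(A/B)=\inf\{\lambda>0:A\le\lambda B\}$. A 2-mean $\mu$ on a set $S$ is nonexpansive if $d(\mu(x_1,x_2),\mu(y_1,y_2))\le\max\{d(x_1,y_1),d(x_2,y_2)\}$ and coordinatewise $\rho$-contractive if $d(\mu(\mathbf{x}),\mu(\mathbf{y}))\le\rho\,d(x_j,y_j)$ whenever $\mathbf{x},\mathbf{y}\in S^2$ differ only in coordinate $j$. *)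

theory Defs
  imports "HOL-Analysis.Analysis"
begin

text \<open>Bounded operators on a (real) Hilbert space 'a :: {real_inner, complete_space}.\<close>

definition self_adjoint_op :: "('a::real_inner \<Rightarrow>\<^sub>L 'a) \<Rightarrow> bool" where
  "self_adjoint_op T \<longleftrightarrow> (\<forall>x y. inner (blinfun_apply T x) y = inner x (blinfun_apply T y))"

definition psd_op :: "('a::real_inner \<Rightarrow>\<^sub>L 'a) \<Rightarrow> bool" where
  "psd_op T \<longleftrightarrow> self_adjoint_op T \<and> (\<forall>x. 0 \<le> inner (blinfun_apply T x) x)"

text \<open>Positive definite (= positive and invertible) bounded operators.\<close>
definition pos_def_op :: "('a::real_inner \<Rightarrow>\<^sub>L 'a) \<Rightarrow> bool" where
  "pos_def_op T \<longleftrightarrow> self_adjoint_op T \<and>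
     (\<exists>c>0. \<forall>x. c * (norm x)\<^sup>2 \<le> inner (blinfun_apply T x) x)"

definition Omega :: "('a::real_inner \<Rightarrow>\<^sub>L 'a) set" where
  "Omega = {T. pos_def_op T}"

definition loewner_le :: "('a::real_inner \<Rightarrow>\<^sub>L 'a) \<Rightarrow> ('a \<Rightarrow>\<^sub>L 'a) \<Rightarrow> bool" where
  "loewner_le A B \<longleftrightarrow> psd_op (B - A)"

definition order_interval :: "('a::real_inner \<Rightarrow>\<^sub>L 'a) \<Rightarrow> ('a \<Rightarrow>\<^sub>L 'a) \<Rightarrow> ('a \<Rightarrow>\<^sub>L 'a) set" where
  "order_interval A B = {X. loewner_le A X \<and> loewner_le X B}"

definition M_op :: "('a::real_inner \<Rightarrow>\<^sub>L 'a) \<Rightarrow> ('a \<Rightarrow>\<^sub>L 'a) \<Rightarrow> real" where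
  "M_op A B = Inf {t::real. t > 0 \<and> loewner_le A (t *\<^sub>R B)}"

definition thompson :: "('a::real_inner \<Rightarrow>\<^sub>L 'a) \<Rightarrow> ('a \<Rightarrow>\<^sub>L 'a) \<Rightarrow> real" where
  "thompson A B = max (ln (M_op A B)) (ln (M_op B A))"

definition op_inv :: "('a::real_normed_vector \<Rightarrow>\<^sub>L 'a) \<Rightarrow> ('a \<Rightarrow>\<^sub>L 'a)" where
  "op_inv A = (THE B. B o\<^sub>L A = id_blinfun \<and> A o\<^sub>L B = id_blinfun)"

definition arith_mean :: "('a::real_normed_vector \<Rightarrow>\<^sub>L 'a) \<Rightarrow> ('a \<Rightarrow>\<^sub>L 'a) \<Rightarrow> ('a \<Rightarrow>\<^sub>L 'a)" where
  "arith_mean X Y = (1/2) *\<^sub>R (X + Y)"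

definition harm_mean :: "('a::real_normed_vector \<Rightarrow>\<^sub>L 'a) \<Rightarrow> ('a \<Rightarrow>\<^sub>L 'a) \<Rightarrow> ('a \<Rightarrow>\<^sub>L 'a)" where
  "harm_mean X Y = 2 *\<^sub>R op_inv (op_inv X + op_inv Y)"

definition nonexpansive_mean ::
  "('a::real_inner \<Rightarrow>\<^sub>L 'a) set \<Rightarrow> (('a \<Rightarrow>\<^sub>L 'a) \<Rightarrow> ('a \<Rightarrow>\<^sub>L 'a) \<Rightarrow> ('a \<Rightarrow>\<^sub>L 'a)) \<Rightarrow> bool" where
  "nonexpansive_mean S \<mu> \<longleftrightarrow> (\<forall>x1\<in>S. \<forall>x2\<in>S. \<forall>y1\<in>S. \<forall>y2\<in>S.
      thompson (\<mu> x1 x2) (\<mu> y1 y2) \<le> max (thompson x1 y1) (thompson x2 y2))"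

definition coord_contractive_mean ::
  "real \<Rightarrow> ('a::real_inner \<Rightarrow>\<^sub>L 'a) set \<Rightarrow> (('a \<Rightarrow>\<^sub>L 'a) \<Rightarrow> ('a \<Rightarrow>\<^sub>L 'a) \<Rightarrow> ('a \<Rightarrow>\<^sub>L 'a)) \<Rightarrow> bool" where
  "coord_contractive_mean \<rho> S \<mu> \<longleftrightarrow>
     (\<forall>x\<in>S. \<forall>y\<in>S. \<forall>z\<in>S.
        thompson (\<mu> x z) (\<mu> y z) \<le> \<rho> * thompson x y \<and>
        thompson (\<mu> z x) (\<mu> z y) \<le> \<rho> * thompson x y)"

end

theory Submission
  imports Defs
begin


definition qf :: "('a::real_inner \<Rightarrow>\<^sub>L 'a) \<Rightarrow> 'a \<Rightarrow> real" where
  "qf T x = inner (blinfun_apply T x) x"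

lemma qf_add[simp]: "qf (A + B) x = qf A x + qf B x"
  by (simp add: qf_def blinfun.add_left inner_add_left)
lemma qf_diff[simp]: "qf (A - B) x = qf A x - qf B x"
  by (simp add: qf_def blinfun.diff_left inner_diff_left)
lemma qf_scale[simp]: "qf (c *\<^sub>R A) x = c * qf A x"
  by (simp add: qf_def blinfun.scaleR_left)
lemma qf_id[simp]: "qf id_blinfun x = (norm x)\<^sup>2"
  by (simp add: qf_def power2_norm_eq_inner)

lemma sa_add: "self_adjoint_op A \<Longrightarrow> self_adjoint_op B \<Longrightarrow> self_adjoint_op (A + B)"
  by (simp add: self_adjoint_op_def blinfun.add_left inner_add_left inner_add_right)
lemma sa_diff: "self_adjoint_op A \<Longrightarrow> self_adjoint_op B \<Longrightarrow> self_adjoint_op (A - B)"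
  by (simp add: self_adjoint_op_def blinfun.diff_left inner_diff_left inner_diff_right)
lemma sa_scale: "self_adjoint_op A \<Longrightarrow> self_adjoint_op (c *\<^sub>R A)"
  by (simp add: self_adjoint_op_def blinfun.scaleR_left)
lemma sa_id: "self_adjoint_op id_blinfun"
  by (simp add: self_adjoint_op_def)

lemma loewner_iff: "self_adjoint_op A \<Longrightarrow> self_adjoint_op B \<Longrightarrow>
   loewner_le A B \<longleftrightarrow> (\<forall>x. qf A x \<le> qf B x)"
  unfolding loewner_le_def psd_op_def
  using sa_diff[of B A] by (auto simp: qf_def[symmetric])

lemma pos_def_inv:
  fixes T :: "'a::{real_inner,complete_space} \<Rightarrow>\<^sub>L 'a"
  assumes "pos_def_op T"
  shows "\<forall>x. T (op_inv T x) = x" "\<forall>x. op_inv T (T x) = x"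
proof -
  obtain c where c: "c > 0" "\<And>x. c * (norm x)\<^sup>2 \<le> qf T x"
    using assms unfolding pos_def_op_def qf_def by auto
  define K where "K = norm T + 1"
  define c' where "c' = min c 1"
  define t where "t = c' / K\<^sup>2"
  have K: "K > 0" "1 \<le> K" "\<And>v. norm (T v) \<le> K * norm v"
  proof -
    show "K > 0" "1 \<le> K" unfolding K_def by (auto simp: add_nonneg_pos)
    fix v
    have "norm (T v) \<le> norm T * norm v" by (rule norm_blinfun)
    also have "\<dots> \<le> K * norm v" unfolding K_def by (intro mult_right_mono) auto
    finally show "norm (T v) \<le> K * norm v" .
  qed
  have c': "c' > 0" "c' \<le> 1" "\<And>x. c' * (norm x)\<^sup>2 \<le> qf T x"
  proof -
    show "c' > 0" "c' \<le> 1" unfolding c'_def using c by auto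
    fix x :: 'a
    have "c' * (norm x)\<^sup>2 \<le> c * (norm x)\<^sup>2" unfolding c'_def by (intro mult_right_mono) auto
    then show "c' * (norm x)\<^sup>2 \<le> qf T x" using c(2)[of x] by linarith
  qed
  have t: "t > 0" unfolding t_def using c' K by auto
  define q2 where "q2 = 1 - c'\<^sup>2 / K\<^sup>2"
  have q2: "0 \<le> q2" "q2 < 1"
  proof -
    have "c'\<^sup>2 \<le> K\<^sup>2" using c' K by (intro power_mono) auto
    then show "0 \<le> q2" unfolding q2_def using K by (simp add: field_simps)
    show "q2 < 1" unfolding q2_def using c' K by simp
  qed
  define q where "q = sqrt q2"
  have q: "0 \<le> q" "q < 1" using q2 unfolding q_def by (auto simp: real_sqrt_lt_1_iff)
  have contr: "norm (v - t *\<^sub>R T v) \<le> q * norm v" for v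
  proof -
    have "(norm (v - t *\<^sub>R T v))\<^sup>2 = (norm v)\<^sup>2 - 2 * t * qf T v + t\<^sup>2 * (norm (T v))\<^sup>2"
    proof -
      have "(norm (v - t *\<^sub>R T v))\<^sup>2 = inner (v - t *\<^sub>R T v) (v - t *\<^sub>R T v)"
        by (rule power2_norm_eq_inner)
      also have "\<dots> = inner v v - 2 * t * inner (T v) v + t\<^sup>2 * inner (T v) (T v)"
        by (simp add: inner_diff_left inner_diff_right inner_commute[of v "T v"] power2_eq_square algebra_simps)
      finally show ?thesis by (simp add: qf_def power2_norm_eq_inner)
    qed
    also have "\<dots> \<le> (norm v)\<^sup>2 - 2 * t * (c' * (norm v)\<^sup>2) + t\<^sup>2 * (K * norm v)\<^sup>2"
    proof -
      have "t * (c' * (norm v)\<^sup>2) \<le> t * qf T v" using t c'(3)[of v] by simp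
      moreover have "(norm (T v))\<^sup>2 \<le> (K * norm v)\<^sup>2" using K(3)[of v] by (intro power_mono) auto
      ultimately show ?thesis
        using mult_left_mono[of "(norm (T v))\<^sup>2" "(K * norm v)\<^sup>2" "t\<^sup>2"] by simp
    qed
    also have "\<dots> = q2 * (norm v)\<^sup>2"
      unfolding q2_def t_def using K by (simp add: field_simps power2_eq_square)
    also have "\<dots> = (q * norm v)\<^sup>2" unfolding q_def using q2 by (simp add: power_mult_distrib)
    finally show ?thesis by (rule power2_le_imp_le[OF _ mult_nonneg_nonneg[OF q(1) norm_ge_zero]])
  qed
  have surj: "\<exists>x. T x = y" for y
  proof -
    define f where "f x = x - t *\<^sub>R (T x - y)" for x
    have "\<forall>x z. dist (f x) (f z) \<le> q * dist x z"
    proof (intro allI)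
      fix x z
      have "f x - f z = (x - z) - t *\<^sub>R T (x - z)"
        unfolding f_def by (simp add: blinfun.diff_right algebra_simps)
      then show "dist (f x) (f z) \<le> q * dist x z" using contr[of "x - z"] by (simp add: dist_norm)
    qed
    then obtain x where "f x = x" using banach_fix_type[OF q] by blast
    then have "t *\<^sub>R (T x - y) = 0" unfolding f_def by simp
    then show ?thesis using t by auto
  qed
  have inj: "T x = T z \<Longrightarrow> x = z" for x z
  proof -
    assume "T x = T z"
    then have "T (x - z) = 0" by (simp add: blinfun.diff_right)
    then have "qf T (x - z) = 0" by (simp add: qf_def)
    then have "c * (norm (x - z))\<^sup>2 \<le> 0" using c(2)[of "x - z"] by simp
    then show "x = z" using c(1) by (simp add: mult_le_0_iff)
  qed
  define g where "g y = (SOME x. T x = y)" for y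
  have Tg: "T (g y) = y" for y unfolding g_def by (rule someI_ex[OF surj])
  have gT: "g (T x) = x" for x by (rule inj[OF Tg])
  have gadd: "g (a + b) = g a + g b" for a b by (rule inj) (simp add: Tg blinfun.add_right)
  have gscale: "g (r *\<^sub>R a) = r *\<^sub>R g a" for a r by (rule inj) (simp add: Tg blinfun.scaleR_right)
  have bnd: "norm (g y) \<le> norm y * (1 / c)" for y
  proof -
    have "c * (norm (g y))\<^sup>2 \<le> qf T (g y)" by (rule c(2))
    also have "\<dots> = inner y (g y)" by (simp add: qf_def Tg)
    also have "\<dots> \<le> norm y * norm (g y)" by (rule norm_cauchy_schwarz)
    finally have "c * norm (g y) * norm (g y) \<le> norm y * norm (g y)" by (simp add: power2_eq_square mult.assoc)
    then have "c * norm (g y) \<le> norm y"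
      by (cases "norm (g y) = 0") (auto simp: mult_le_cancel_right)
    then show ?thesis using c(1) by (simp add: field_simps)
  qed
  have bl: "bounded_linear g"
    by (rule bounded_linear_intro[OF gadd gscale bnd])
  define G where "G = Blinfun g"
  have G: "blinfun_apply G = g" unfolding G_def using bl by (rule bounded_linear_Blinfun_apply)
  have "op_inv T = G"
    unfolding op_inv_def
  proof (rule the_equality)
    show "G o\<^sub>L T = id_blinfun \<and> T o\<^sub>L G = id_blinfun"
      by (auto intro!: blinfun_eqI simp: G gT Tg)
    fix B assume B: "B o\<^sub>L T = id_blinfun \<and> T o\<^sub>L B = id_blinfun"
    show "B = G"
    proof (rule blinfun_eqI)
      fix y
      have "B y = B (T (g y))" by (simp add: Tg)
      also have "\<dots> = g y" using B by (metis blinfun_apply_blinfun_compose blinfun_apply_id_blinfun)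
      finally show "B y = G y" by (simp add: G)
    qed
  qed
  then show "\<forall>x. T (op_inv T x) = x" "\<forall>x. op_inv T (T x) = x" by (auto simp: G Tg gT)
qed




lemma inS:
  "X \<in> order_interval (c *\<^sub>R id_blinfun) (d *\<^sub>R id_blinfun) \<longleftrightarrow>
   self_adjoint_op X \<and> (\<forall>x. c * (norm x)\<^sup>2 \<le> qf X x \<and> qf X x \<le> d * (norm x)\<^sup>2)"
proof
  assume X: "X \<in> order_interval (c *\<^sub>R id_blinfun) (d *\<^sub>R id_blinfun)"
  then have "self_adjoint_op (X - c *\<^sub>R id_blinfun)"
    unfolding order_interval_def loewner_le_def psd_op_def by auto
  then have "self_adjoint_op ((X - c *\<^sub>R id_blinfun) + c *\<^sub>R id_blinfun)"
    by (intro sa_add sa_scale sa_id)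
  then have sa: "self_adjoint_op X" by simp
  then show "self_adjoint_op X \<and> (\<forall>x. c * (norm x)\<^sup>2 \<le> qf X x \<and> qf X x \<le> d * (norm x)\<^sup>2)"
    using X unfolding order_interval_def
    by (simp add: loewner_iff sa_scale sa_id)
next
  assume "self_adjoint_op X \<and> (\<forall>x. c * (norm x)\<^sup>2 \<le> qf X x \<and> qf X x \<le> d * (norm x)\<^sup>2)"
  then show "X \<in> order_interval (c *\<^sub>R id_blinfun) (d *\<^sub>R id_blinfun)"
    unfolding order_interval_def by (simp add: loewner_iff sa_scale sa_id)
qed

lemma M_le:
  assumes "self_adjoint_op A" "self_adjoint_op B" "l > 0" "\<And>x. qf A x \<le> l * qf B x"
  shows "M_op A B \<le> l"
  unfolding M_op_def
proof (rule cInf_lower)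
  show "l \<in> {t. 0 < t \<and> loewner_le A (t *\<^sub>R B)}"
    using assms by (simp add: loewner_iff sa_scale)
  show "bdd_below {t::real. 0 < t \<and> loewner_le A (t *\<^sub>R B)}"
    by (rule bdd_belowI[of _ 0]) auto
qed

lemma M_above:
  assumes "self_adjoint_op A" "self_adjoint_op B" "\<And>x. qf B x \<ge> 0"
    "s > 0" "\<And>x. qf A x \<le> s * qf B x"
  shows "0 \<le> M_op A B" "\<And>t x. t > M_op A B \<Longrightarrow> qf A x \<le> t * qf B x"
proof -
  let ?T = "{t::real. 0 < t \<and> loewner_le A (t *\<^sub>R B)}"
  have ne: "?T \<noteq> {}" using assms by (auto simp: loewner_iff sa_scale)
  show "0 \<le> M_op A B" unfolding M_op_def by (rule cInf_greatest[OF ne]) auto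
  fix t x assume "t > M_op A B"
  have bdd: "bdd_below ?T" by (rule bdd_belowI[of _ 0]) auto
  obtain s' where s': "s' \<in> ?T" "s' < t"
    using \<open>t > M_op A B\<close> cInf_less_iff[OF ne bdd, of t] unfolding M_op_def by blast
  then have "qf A x \<le> s' * qf B x" using assms by (auto simp: loewner_iff sa_scale)
  also have "\<dots> \<le> t * qf B x" using s' assms(3)[of x] by (intro mult_right_mono) auto
  finally show "qf A x \<le> t * qf B x" .
qed

lemma ln_le_helper: "0 \<le> (M::real) \<Longrightarrow> M \<le> l \<Longrightarrow> 1 \<le> l \<Longrightarrow> ln M \<le> ln l"
proof (cases "M = 0")
  case True
  assume "1 \<le> l" then show ?thesis using True ln_ge_zero[of l] by (simp add: ln_0)
next
  case False
  assume "0 \<le> M" "M \<le> l" then show ?thesis using False by simp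
qed

lemma thompson_le:
  assumes "self_adjoint_op A" "self_adjoint_op B" "l \<ge> 1"
    "\<And>x. qf A x \<le> l * qf B x" "\<And>x. qf B x \<le> l * qf A x"
    "\<And>x. qf A x \<ge> 0" "\<And>x. qf B x \<ge> 0"
  shows "thompson A B \<le> ln l"
proof -
  have "0 \<le> M_op A B" using M_above(1)[OF assms(1,2,7), of l] assms by auto
  moreover have "M_op A B \<le> l" using M_le[OF assms(1,2), of l] assms by auto
  moreover have "0 \<le> M_op B A" using M_above(1)[OF assms(2,1,6), of l] assms by auto
  moreover have "M_op B A \<le> l" using M_le[OF assms(2,1), of l] assms by auto
  ultimately show ?thesis unfolding thompson_def using ln_le_helper assms(3) by auto
qed

lemma from_thompson:
  assumes "self_adjoint_op A" "self_adjoint_op B" "\<And>x. qf B x \<ge> 0"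
    "s > 0" "\<And>x. qf A x \<le> s * qf B x" "thompson A B \<le> r"
  shows "qf A x \<le> exp r * qf B x"
proof -
  note M = M_above[OF assms(1-5)]
  have "ln (M_op A B) \<le> r" using assms(6) unfolding thompson_def by auto
  then have Me: "M_op A B \<le> exp r"
  proof (cases "M_op A B = 0")
    case True then show ?thesis by simp
  next
    case False
    assume lr: "ln (M_op A B) \<le> r"
    have "0 < M_op A B" using False M(1) by linarith
    then have "M_op A B = exp (ln (M_op A B))" by simp
    also have "\<dots> \<le> exp r" using lr by simp
    finally show ?thesis .
  qed
  show ?thesis
  proof (rule field_le_epsilon)
    fix e :: real assume e: "e > 0"
    have pos: "e / (qf B x + 1) > 0" using e assms(3)[of x] by simp
    have "exp r + e / (qf B x + 1) > M_op A B" using Me pos by linarith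
    then have "qf A x \<le> (exp r + e / (qf B x + 1)) * qf B x" by (rule M(2))
    also have "\<dots> = exp r * qf B x + e * (qf B x / (qf B x + 1))"
      by (simp add: distrib_right)
    also have "\<dots> \<le> exp r * qf B x + e * 1"
      using assms(3)[of x] e by (intro add_left_mono mult_left_mono) auto
    finally show "qf A x \<le> exp r * qf B x + e" by simp
  qed
qed




lemma thompson_nonneg:
  assumes "self_adjoint_op A" "self_adjoint_op B" "c > 0"
    "\<And>x. c * (norm x)\<^sup>2 \<le> qf A x" "\<And>x. c * (norm x)\<^sup>2 \<le> qf B x"
    "s > 0" "\<And>x. qf A x \<le> s * qf B x" "\<And>x. qf B x \<le> s * qf A x"
  shows "0 \<le> thompson A B"
proof (rule ccontr)
  assume neg: "\<not> 0 \<le> thompson A B"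
  have qA: "qf A x \<ge> 0" for x using assms(3) assms(4)[of x] by (smt (verit) zero_le_mult_iff zero_le_power2)
  have qB: "qf B x \<ge> 0" for x using assms(3) assms(5)[of x] by (smt (verit) zero_le_mult_iff zero_le_power2)
  note M1 = M_above[OF assms(1,2) qB assms(6,7)]
  note M2 = M_above[OF assms(2,1) qA assms(6,8)]
  have l1: "ln (M_op A B) < 0" and l2: "ln (M_op B A) < 0" using neg unfolding thompson_def by auto
  have p1: "0 < M_op A B" using l1 M1(1) by (cases "M_op A B = 0") auto
  have p2: "0 < M_op B A" using l2 M2(1) by (cases "M_op B A = 0") auto
  have m1: "M_op A B < 1" using l1 p1 by simp
  have m2: "M_op B A < 1" using l2 p2 by simp
  define t1 where "t1 = (M_op A B + 1) / 2"
  define t2 where "t2 = (M_op B A + 1) / 2"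
  have t1: "t1 > M_op A B" "t1 < 1" "t1 > 0" using m1 p1 unfolding t1_def by auto
  have t2: "t2 > M_op B A" "t2 < 1" "t2 > 0" using m2 p2 unfolding t2_def by auto
  have zero: "x = 0" for x :: 'a
  proof -
    have "qf A x \<le> t1 * qf B x" by (rule M1(2)[OF t1(1)])
    also have "\<dots> \<le> t1 * (t2 * qf A x)" using t1(3) M2(2)[OF t2(1), of x] by (intro mult_left_mono) auto
    finally have "(1 - t1 * t2) * qf A x \<le> 0" by (simp add: algebra_simps)
    moreover have "t1 * t2 < 1" using t1 t2 by (metis less_trans mult_strict_left_mono mult.right_neutral)
    ultimately have "qf A x \<le> 0" by (simp add: mult_le_0_iff)
    then have "c * (norm x)\<^sup>2 \<le> 0" using assms(4)[of x] by linarith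
    then show "x = 0" using assms(3) by (simp add: mult_le_0_iff)
  qed
  have "M_op A B \<le> M_op A B / 2"
  proof (rule M_le[OF assms(1,2)])
    show "0 < M_op A B / 2" using p1 by simp
    fix x :: 'a
    show "qf A x \<le> M_op A B / 2 * qf B x" using zero[of x] by (simp add: qf_def)
  qed
  then show False using p1 by simp
qed

lemma psd_of_pd: "pos_def_op A \<Longrightarrow> qf A x \<ge> 0"
  unfolding pos_def_op_def qf_def
  by (smt (verit) zero_le_mult_iff zero_le_power2)

lemma inv_sa:
  fixes A :: "'a::{real_inner,complete_space} \<Rightarrow>\<^sub>L 'a"
  assumes "pos_def_op A"
  shows "self_adjoint_op (op_inv A)"
  unfolding self_adjoint_op_def
proof (intro allI)
  fix x y
  note I = pos_def_inv[OF assms]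
  have sa: "inner (A u) v = inner u (A v)" for u v using assms unfolding pos_def_op_def self_adjoint_op_def by auto
  have "inner (op_inv A x) y = inner (op_inv A x) (A (op_inv A y))" using I by simp
  also have "\<dots> = inner (A (op_inv A x)) (op_inv A y)" by (simp add: sa)
  also have "\<dots> = inner x (op_inv A y)" using I by simp
  finally show "inner (op_inv A x) y = inner x (op_inv A y)" .
qed

lemma inv_anti:
  fixes A B :: "'a::{real_inner,complete_space} \<Rightarrow>\<^sub>L 'a"
  assumes "pos_def_op A" "pos_def_op B" "l > 0" "\<And>x. qf A x \<le> l * qf B x"
  shows "qf (op_inv B) x \<le> l * qf (op_inv A) x"
proof -
  note IA = pos_def_inv[OF assms(1)]
  note IB = pos_def_inv[OF assms(2)]
  have saA: "inner (A u) v = inner u (A v)" for u v using assms unfolding pos_def_op_def self_adjoint_op_def by auto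
  define u where "u = op_inv B x"
  define w where "w = op_inv A x"
  define y where "y = (1 / l) *\<^sub>R u"
  have Bu: "B u = x" unfolding u_def using IB by simp
  have Aw: "A w = x" unfolding w_def using IA by simp
  have e1: "A (y - w) = A y - x" by (simp add: blinfun.diff_right Aw)
  have e2: "inner (A y) w = inner x y" using saA[of y w] Aw by (simp add: inner_commute)
  have "0 \<le> qf A (y - w)" by (rule psd_of_pd[OF assms(1)])
  also have "qf A (y - w) = inner (A y - x) (y - w)" by (simp add: qf_def e1)
  also have "\<dots> = inner (A y) y - inner (A y) w - inner x y + inner x w"
    by (simp add: inner_diff_left inner_diff_right)
  also have "\<dots> = qf A y - 2 * inner x y + inner x w" by (simp add: e2 qf_def)
  finally have 1: "2 * inner x y - qf A y \<le> inner x w" by simp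
  have "qf A y = qf A u / l\<^sup>2" unfolding y_def qf_def by (simp add: blinfun.scaleR_right power2_eq_square)
  moreover have "inner x y = inner x u / l" unfolding y_def by simp
  ultimately have "2 * (inner x u / l) - qf A u / l\<^sup>2 \<le> inner x w" using 1 by simp
  then have "l * (2 * (inner x u / l) - qf A u / l\<^sup>2) \<le> l * inner x w" using assms(3) by simp
  moreover have "l * (2 * (inner x u / l) - qf A u / l\<^sup>2) = 2 * inner x u - qf A u / l"
    using assms(3) by (simp add: field_simps power2_eq_square)
  ultimately have 2: "2 * inner x u - qf A u / l \<le> l * inner x w" by simp
  have "qf A u / l \<le> qf B u" using assms(3) assms(4)[of u] by (simp add: field_simps mult.commute)
  moreover have "qf B u = inner x u" unfolding qf_def by (simp add: Bu)
  ultimately have "inner x u \<le> l * inner x w" using 2 by linarith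
  then show ?thesis unfolding qf_def u_def w_def by (simp add: inner_commute)
qed

lemma inv_id:
  "op_inv (id_blinfun :: 'a::{real_inner,complete_space} \<Rightarrow>\<^sub>L 'a) = id_blinfun"
proof -
  have "pos_def_op (id_blinfun :: 'a \<Rightarrow>\<^sub>L 'a)"
    unfolding pos_def_op_def using sa_id by (auto intro!: exI[of _ 1] simp: power2_norm_eq_inner)
  from pos_def_inv(1)[OF this] show ?thesis by (intro blinfun_eqI) simp
qed

lemma pd_of_bounds: "self_adjoint_op X \<Longrightarrow> c > 0 \<Longrightarrow> (\<And>x. c * (norm x)\<^sup>2 \<le> qf X x) \<Longrightarrow> pos_def_op X"
  unfolding pos_def_op_def qf_def by blast

lemma inv_S:
  fixes X :: "'a::{real_inner,complete_space} \<Rightarrow>\<^sub>L 'a"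
  assumes N: "N > 0" and X: "X \<in> order_interval ((1/N) *\<^sub>R id_blinfun) (N *\<^sub>R id_blinfun)"
  shows "op_inv X \<in> order_interval ((1/N) *\<^sub>R id_blinfun) (N *\<^sub>R id_blinfun)"
proof -
  have sa: "self_adjoint_op X" and b: "\<And>x. (1/N) * (norm x)\<^sup>2 \<le> qf X x \<and> qf X x \<le> N * (norm x)\<^sup>2"
    using X unfolding inS by auto
  have pd: "pos_def_op X" by (rule pd_of_bounds[OF sa, of "1/N"]) (use N b in auto)
  have pdI: "pos_def_op (id_blinfun :: 'a \<Rightarrow>\<^sub>L 'a)"
    unfolding pos_def_op_def using sa_id by (auto intro!: exI[of _ 1] simp: power2_norm_eq_inner)
  have lowN: "qf id_blinfun z \<le> N * qf X z" for z
  proof -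
    have "N * ((1/N) * (norm z)\<^sup>2) \<le> N * qf X z" using b[of z] N by (intro mult_left_mono) auto
    then show ?thesis using N by simp
  qed
  have u: "qf (op_inv X) x \<le> N * (norm x)\<^sup>2" for x
    using inv_anti[OF pdI pd N lowN, of x] by (simp add: inv_id)
  have l: "(1/N) * (norm x)\<^sup>2 \<le> qf (op_inv X) x" for x
  proof -
    have "qf (op_inv id_blinfun) x \<le> N * qf (op_inv X) x"
      by (rule inv_anti[OF pd pdI N]) (use b N in \<open>auto simp: field_simps mult.commute\<close>)
    then show ?thesis using N by (simp add: inv_id field_simps)
  qed
  show ?thesis unfolding inS using inv_sa[OF pd] u l by auto
qed




definition SS :: "real \<Rightarrow> ('a::real_inner \<Rightarrow>\<^sub>L 'a) set" where
  "SS N = order_interval ((1/N) *\<^sub>R id_blinfun) (N *\<^sub>R id_blinfun)"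

lemma SS_facts:
  assumes "N \<ge> 1" "X \<in> SS N"
  shows "self_adjoint_op X" "(1/N) * (norm x)\<^sup>2 \<le> qf X x" "qf X x \<le> N * (norm x)\<^sup>2" "qf X x \<ge> 0"
    "pos_def_op X"
proof -
  show sa: "self_adjoint_op X" and l: "(1/N) * (norm x)\<^sup>2 \<le> qf X x" and "qf X x \<le> N * (norm x)\<^sup>2"
    using assms(2) unfolding SS_def inS by auto
  show "qf X x \<ge> 0" using l assms(1) by (smt (verit) divide_nonneg_nonneg zero_le_mult_iff zero_le_power2)
  have b: "\<And>z. (1/N) * (norm z)\<^sup>2 \<le> qf X z" using assms(2) unfolding SS_def inS by auto
  show "pos_def_op X"
    by (rule pd_of_bounds[OF sa, of "1/N", OF _ b]) (use assms(1) in simp)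
qed

lemma SS_cross:
  assumes "N \<ge> 1" "X \<in> SS N" "Y \<in> SS N"
  shows "qf X x \<le> N\<^sup>2 * qf Y x"
proof -
  have "qf X x \<le> N * (norm x)\<^sup>2" by (rule SS_facts[OF assms(1,2)])
  also have "\<dots> = N\<^sup>2 * ((1/N) * (norm x)\<^sup>2)" using assms(1) by (simp add: power2_eq_square)
  also have "\<dots> \<le> N\<^sup>2 * qf Y x" by (intro mult_left_mono SS_facts[OF assms(1,3)]) auto
  finally show ?thesis .
qed

lemma SS_inv: "N \<ge> 1 \<Longrightarrow> X \<in> SS N \<Longrightarrow> op_inv (X :: 'a::{real_inner,complete_space} \<Rightarrow>\<^sub>L 'a) \<in> SS N"
  unfolding SS_def by (rule inv_S) auto

lemma SS_rel:
  assumes "N \<ge> 1" "X \<in> SS N" "Y \<in> SS N"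
  shows "0 \<le> thompson X Y" "qf X x \<le> exp (thompson X Y) * qf Y x" "qf Y x \<le> exp (thompson X Y) * qf X x"
proof -
  note FX = SS_facts[OF assms(1,2)] and FY = SS_facts[OF assms(1,3)]
  have N2: "N\<^sup>2 > 0" using assms(1) by simp
  show "0 \<le> thompson X Y"
    by (rule thompson_nonneg[OF FX(1) FY(1), of "1/N" "N\<^sup>2"])
       (use assms FX FY SS_cross[OF assms(1,2,3)] SS_cross[OF assms(1,3,2)] in auto)
  show "qf X x \<le> exp (thompson X Y) * qf Y x"
    by (rule from_thompson[OF FX(1) FY(1) _ N2]) (use SS_cross[OF assms(1,2,3)] FY in auto)
  have "thompson Y X = thompson X Y" unfolding thompson_def by simp
  then show "qf Y x \<le> exp (thompson X Y) * qf X x"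
    using from_thompson[OF FY(1) FX(1) _ N2, of "thompson Y X" x] SS_cross[OF assms(1,3,2)] FX by auto
qed

lemma inv_psd: "pos_def_op (P :: 'a::{real_inner,complete_space} \<Rightarrow>\<^sub>L 'a) \<Longrightarrow> qf (op_inv P) x \<ge> 0"
proof -
  assume P: "pos_def_op P"
  note I = pos_def_inv[OF P]
  have "qf (op_inv P) x = inner (op_inv P x) (P (op_inv P x))" unfolding qf_def using I by simp
  also have "\<dots> = qf P (op_inv P x)" unfolding qf_def using P unfolding pos_def_op_def self_adjoint_op_def
    by (simp add: inner_commute)
  finally show ?thesis using psd_of_pd[OF P] by simp
qed

lemma SS_inv_rel:
  fixes X Y :: "'a::{real_inner,complete_space} \<Rightarrow>\<^sub>L 'a"
  assumes "N \<ge> 1" "X \<in> SS N" "Y \<in> SS N"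
  shows "qf (op_inv X) x \<le> exp (thompson X Y) * qf (op_inv Y) x"
        "qf (op_inv Y) x \<le> exp (thompson X Y) * qf (op_inv X) x"
proof -
  note FX = SS_facts[OF assms(1,2)] and FY = SS_facts[OF assms(1,3)]
  show "qf (op_inv X) x \<le> exp (thompson X Y) * qf (op_inv Y) x"
    by (rule inv_anti[OF FY(5) FX(5)]) (use SS_rel[OF assms] in auto)
  show "qf (op_inv Y) x \<le> exp (thompson X Y) * qf (op_inv X) x"
    by (rule inv_anti[OF FX(5) FY(5)]) (use SS_rel[OF assms] in auto)
qed

lemma am_bound:
  assumes "self_adjoint_op P" "self_adjoint_op Q" "\<And>x. qf P x \<ge> 0" "\<And>x. qf Q x \<ge> 0" "l \<ge> 1"
    "\<And>x. qf P x \<le> l * qf Q x" "\<And>x. qf Q x \<le> l * qf P x"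
  shows "thompson ((1/2) *\<^sub>R P) ((1/2) *\<^sub>R Q) \<le> ln l"
  by (rule thompson_le) (use assms in \<open>auto intro: sa_scale\<close>)

lemma hm_bound:
  fixes P Q :: "'a::{real_inner,complete_space} \<Rightarrow>\<^sub>L 'a"
  assumes "pos_def_op P" "pos_def_op Q" "l \<ge> 1"
    "\<And>x. qf P x \<le> l * qf Q x" "\<And>x. qf Q x \<le> l * qf P x"
  shows "thompson (2 *\<^sub>R op_inv P) (2 *\<^sub>R op_inv Q) \<le> ln l"
proof (rule thompson_le)
  have l0: "l > 0" using assms(3) by simp
  show "self_adjoint_op (2 *\<^sub>R op_inv P)" "self_adjoint_op (2 *\<^sub>R op_inv Q)"
    using inv_sa assms(1,2) sa_scale by blast+
  show "1 \<le> l" by fact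
  fix x
  show "qf (2 *\<^sub>R op_inv P) x \<le> l * qf (2 *\<^sub>R op_inv Q) x"
    using inv_anti[OF assms(2,1) l0 assms(5), of x] by simp
  show "qf (2 *\<^sub>R op_inv Q) x \<le> l * qf (2 *\<^sub>R op_inv P) x"
    using inv_anti[OF assms(1,2) l0 assms(4), of x] by simp
  show "0 \<le> qf (2 *\<^sub>R op_inv P) x" "0 \<le> qf (2 *\<^sub>R op_inv Q) x"
    using inv_psd[OF assms(1), of x] inv_psd[OF assms(2), of x] by simp_all
qed

lemma core:
  assumes N: "N \<ge> 1" and S: "X \<in> SS N" "Y \<in> SS N" "Z \<in> SS N" and s: "s \<ge> 1"
    and le: "\<And>x. qf X x \<le> s * qf Y x"
  shows "qf (X + Z) x \<le> ((N\<^sup>2 * min s (N\<^sup>2) + 1) / (N\<^sup>2 + 1)) * qf (Y + Z) x"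
proof -
  define a where "a = N\<^sup>2"
  define t where "t = min s a"
  define l where "l = (a * t + 1) / (a + 1)"
  have a: "a \<ge> 1" unfolding a_def using N by (simp add: one_le_power)
  have t: "t \<ge> 1" unfolding t_def using s a by simp
  have qY: "qf Y x \<ge> 0" by (rule SS_facts[OF N S(2)])
  have "qf X x \<le> t * qf Y x"
  proof (cases "s \<le> a")
    case True then show ?thesis using le[of x] unfolding t_def by simp
  next
    case False then show ?thesis using SS_cross[OF N S(1,2), of x] unfolding t_def a_def by simp
  qed
  note h1 = this
  have "qf Y x \<le> a * qf Z x" unfolding a_def by (rule SS_cross[OF N S(2,3)])
  then have h2: "(t - 1) / (a + 1) * qf Y x \<le> (t - 1) / (a + 1) * (a * qf Z x)"
    using t a by (intro mult_left_mono) auto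
  define c where "c = (t - 1) / (a + 1)"
  have e1: "l - t = - c" unfolding l_def c_def using a by (simp add: field_simps)
  have e2: "l - 1 = c * a" unfolding l_def c_def using a by (simp add: field_simps)
  have "l * (qf Y x + qf Z x) = t * qf Y x + qf Z x + ((l - t) * qf Y x + (l - 1) * qf Z x)"
    by (simp add: algebra_simps)
  also have "\<dots> = t * qf Y x + qf Z x + (c * (a * qf Z x) - c * qf Y x)"
    by (simp add: e1 e2 algebra_simps)
  finally have "l * (qf Y x + qf Z x) = t * qf Y x + qf Z x + (c * (a * qf Z x) - c * qf Y x)" .
  then have "qf X x + qf Z x \<le> l * (qf Y x + qf Z x)" using h1 h2 unfolding c_def by linarith
  then show ?thesis unfolding l_def t_def a_def by simp
qed

lemma numeric:
  fixes N r a t l :: real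
  assumes N: "N \<ge> 1" and r: "r \<ge> 0"
    and a_def: "a = N\<^sup>2" and t_def: "t = min (exp r) a" and l_def: "l = (a * t + 1) / (a + 1)"
  shows "l \<ge> 1" "ln l \<le> (1 - 1 / ((a + 1) * a)) * r"
proof -
  have a: "a \<ge> 1" unfolding a_def using N by (simp add: one_le_power)
  note t_def = t_def[unfolded a_def[symmetric]]
  have t: "1 \<le> t" "t \<le> a" "t \<le> exp r" unfolding t_def using a r by auto
  show l1: "l \<ge> 1" unfolding l_def using t a by (simp add: field_simps)
  have lnt: "ln t \<le> r" using t(3) t(1) by (metis exp_le_cancel_iff exp_ln less_le_trans zero_less_one)
  have lnt0: "ln t \<ge> 0" using t by simp
  have tp: "t > 0" using t by simp
  have "l / t > 0" using l1 tp by simp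
  have "ln l = ln t + ln (l / t)" using l1 tp by (simp add: ln_div)
  also have "ln (l / t) \<le> l / t - 1" by (rule ln_le_minus_one) fact
  also have "l / t - 1 = - ((t - 1) / ((a + 1) * t))"
  proof -
    have d: "t + a * t > 0" using a tp by (simp add: add_pos_nonneg)
    show ?thesis unfolding l_def using a tp d
      by (simp add: field_simps add_divide_distrib[symmetric])
  qed
  also have "(t - 1) / ((a + 1) * t) \<ge> ln t / ((a + 1) * a)"
  proof -
    have "ln t / ((a + 1) * a) \<le> ln t / ((a + 1) * t)"
      using lnt0 t a by (intro divide_left_mono mult_left_mono mult_pos_pos) auto
    also have "\<dots> \<le> (t - 1) / ((a + 1) * t)"
      using ln_le_minus_one[OF tp] a tp by (intro divide_right_mono) auto
    finally show ?thesis .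
  qed
  then have "ln t + - ((t - 1) / ((a + 1) * t)) \<le> ln t - ln t / ((a + 1) * a)" by simp
  also have "\<dots> = (1 - 1 / ((a + 1) * a)) * ln t" by (simp add: algebra_simps)
  also have "\<dots> \<le> (1 - 1 / ((a + 1) * a)) * r"
  proof (rule mult_left_mono[OF lnt])
    have p: "1 \<le> (a + 1) * a" using mult_mono[of 1 "a+1" 1 a] a by simp
    have "1 / ((a + 1) * a) \<le> 1" using p by simp
    then show "0 \<le> 1 - 1 / ((a + 1) * a)" by simp
  qed
  finally show "ln l \<le> (1 - 1 / ((a + 1) * a)) * r" by simp
qed




lemma exp_up: "r \<le> m \<Longrightarrow> q \<ge> 0 \<Longrightarrow> v \<le> exp r * q \<Longrightarrow> v \<le> exp m * (q::real)"
  by (meson exp_le_cancel_iff mult_right_mono order_trans)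

lemma SS_pd_sum:
  fixes X Z :: "'a::{real_inner,complete_space} \<Rightarrow>\<^sub>L 'a"
  assumes N: "N \<ge> 1" and S: "X \<in> SS N" "Z \<in> SS N"
  shows "pos_def_op (X + Z)"
proof (rule pd_of_bounds[of _ "1/N"])
  show "self_adjoint_op (X + Z)" using SS_facts(1)[OF N S(1)] SS_facts(1)[OF N S(2)] by (rule sa_add)
  show "0 < 1 / N" using N by simp
  fix x
  show "1 / N * (norm x)\<^sup>2 \<le> qf (X + Z) x"
    using SS_facts(2)[OF N S(1), of x] SS_facts(4)[OF N S(2), of x] by simp
qed

lemma am_contr:
  fixes X Y Z :: "'a::{real_inner,complete_space} \<Rightarrow>\<^sub>L 'a"
  assumes N: "N \<ge> 1" and S: "X \<in> SS N" "Y \<in> SS N" "Z \<in> SS N"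
  shows "thompson (arith_mean X Z) (arith_mean Y Z) \<le> (1 - 1 / ((N\<^sup>2 + 1) * N\<^sup>2)) * thompson X Y"
proof -
  define r where "r = thompson X Y"
  define t where "t = min (exp r) (N\<^sup>2)"
  define l where "l = (N\<^sup>2 * t + 1) / (N\<^sup>2 + 1)"
  have r: "r \<ge> 0" unfolding r_def by (rule SS_rel(1)[OF N S(1,2)])
  note num = numeric[OF N r refl t_def l_def]
  have s: "exp r \<ge> 1" using r by simp
  have h1: "qf (X + Z) x \<le> l * qf (Y + Z) x" for x
    using core[OF N S(1,2,3) s, of x] SS_rel(2)[OF N S(1,2)] unfolding l_def t_def r_def by auto
  have h2: "qf (Y + Z) x \<le> l * qf (X + Z) x" for x
    using core[OF N S(2,1,3) s, of x] SS_rel(3)[OF N S(1,2)] unfolding l_def t_def r_def by auto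
  have "thompson (arith_mean X Z) (arith_mean Y Z) \<le> ln l"
    unfolding arith_mean_def
    by (rule am_bound[OF _ _ _ _ num(1) h1 h2])
       (use SS_facts[OF N S(1)] SS_facts[OF N S(2)] SS_facts[OF N S(3)] in \<open>auto intro: sa_add add_nonneg_nonneg\<close>)
  also have "\<dots> \<le> (1 - 1 / ((N\<^sup>2 + 1) * N\<^sup>2)) * thompson X Y" using num(2) unfolding r_def .
  finally show ?thesis .
qed

lemma hm_contr:
  fixes X Y Z :: "'a::{real_inner,complete_space} \<Rightarrow>\<^sub>L 'a"
  assumes N: "N \<ge> 1" and S: "X \<in> SS N" "Y \<in> SS N" "Z \<in> SS N"
  shows "thompson (harm_mean X Z) (harm_mean Y Z) \<le> (1 - 1 / ((N\<^sup>2 + 1) * N\<^sup>2)) * thompson X Y"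
proof -
  define r where "r = thompson X Y"
  define t where "t = min (exp r) (N\<^sup>2)"
  define l where "l = (N\<^sup>2 * t + 1) / (N\<^sup>2 + 1)"
  have r: "r \<ge> 0" unfolding r_def by (rule SS_rel(1)[OF N S(1,2)])
  note num = numeric[OF N r refl t_def l_def]
  have s: "exp r \<ge> 1" using r by simp
  have S': "op_inv X \<in> SS N" "op_inv Y \<in> SS N" "op_inv Z \<in> SS N" using SS_inv N S by auto
  have h1: "qf (op_inv X + op_inv Z) x \<le> l * qf (op_inv Y + op_inv Z) x" for x
    using core[OF N S'(1,2,3) s, of x] SS_inv_rel(1)[OF N S(1,2)] unfolding l_def t_def r_def by auto
  have h2: "qf (op_inv Y + op_inv Z) x \<le> l * qf (op_inv X + op_inv Z) x" for x
    using core[OF N S'(2,1,3) s, of x] SS_inv_rel(2)[OF N S(1,2)] unfolding l_def t_def r_def by auto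
  have "thompson (harm_mean X Z) (harm_mean Y Z) \<le> ln l"
    unfolding harm_mean_def
    by (rule hm_bound[OF SS_pd_sum[OF N S'(1,3)] SS_pd_sum[OF N S'(2,3)] num(1) h1 h2])
  also have "\<dots> \<le> (1 - 1 / ((N\<^sup>2 + 1) * N\<^sup>2)) * thompson X Y" using num(2) unfolding r_def .
  finally show ?thesis .
qed

lemma am_nonexp:
  fixes X1 X2 Y1 Y2 :: "'a::{real_inner,complete_space} \<Rightarrow>\<^sub>L 'a"
  assumes N: "N \<ge> 1" and S: "X1 \<in> SS N" "X2 \<in> SS N" "Y1 \<in> SS N" "Y2 \<in> SS N"
  shows "thompson (arith_mean X1 X2) (arith_mean Y1 Y2) \<le> max (thompson X1 Y1) (thompson X2 Y2)"
proof -
  define m where "m = max (thompson X1 Y1) (thompson X2 Y2)"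
  have m: "m \<ge> 0" unfolding m_def using SS_rel(1)[OF N S(1,3)] by linarith
  have l: "exp m \<ge> 1" using m by simp
  note F = SS_facts[OF N S(1)] SS_facts[OF N S(2)] SS_facts[OF N S(3)] SS_facts[OF N S(4)]
  have h1: "qf (X1 + X2) x \<le> exp m * qf (Y1 + Y2) x" for x
    using exp_up[OF _ _ SS_rel(2)[OF N S(1,3)], of m x] exp_up[OF _ _ SS_rel(2)[OF N S(2,4)], of m x] F
    unfolding m_def by (simp add: distrib_left)
  have h2: "qf (Y1 + Y2) x \<le> exp m * qf (X1 + X2) x" for x
    using exp_up[OF _ _ SS_rel(3)[OF N S(1,3)], of m x] exp_up[OF _ _ SS_rel(3)[OF N S(2,4)], of m x] F
    unfolding m_def by (simp add: distrib_left)
  have "thompson (arith_mean X1 X2) (arith_mean Y1 Y2) \<le> ln (exp m)"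
    unfolding arith_mean_def
    by (rule am_bound[OF _ _ _ _ l h1 h2]) (use F in \<open>auto intro: sa_add add_nonneg_nonneg\<close>)
  then show ?thesis unfolding m_def by simp
qed

lemma hm_nonexp:
  fixes X1 X2 Y1 Y2 :: "'a::{real_inner,complete_space} \<Rightarrow>\<^sub>L 'a"
  assumes N: "N \<ge> 1" and S: "X1 \<in> SS N" "X2 \<in> SS N" "Y1 \<in> SS N" "Y2 \<in> SS N"
  shows "thompson (harm_mean X1 X2) (harm_mean Y1 Y2) \<le> max (thompson X1 Y1) (thompson X2 Y2)"
proof -
  define m where "m = max (thompson X1 Y1) (thompson X2 Y2)"
  have m: "m \<ge> 0" unfolding m_def using SS_rel(1)[OF N S(1,3)] by linarith
  have l: "exp m \<ge> 1" using m by simp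
  have S': "op_inv X1 \<in> SS N" "op_inv X2 \<in> SS N" "op_inv Y1 \<in> SS N" "op_inv Y2 \<in> SS N"
    using SS_inv N S by auto
  note F = SS_facts[OF N S'(1)] SS_facts[OF N S'(2)] SS_facts[OF N S'(3)] SS_facts[OF N S'(4)]
  have h1: "qf (op_inv X1 + op_inv X2) x \<le> exp m * qf (op_inv Y1 + op_inv Y2) x" for x
    using exp_up[OF _ _ SS_inv_rel(1)[OF N S(1,3)], of m x] exp_up[OF _ _ SS_inv_rel(1)[OF N S(2,4)], of m x] F
    unfolding m_def by (simp add: distrib_left)
  have h2: "qf (op_inv Y1 + op_inv Y2) x \<le> exp m * qf (op_inv X1 + op_inv X2) x" for x
    using exp_up[OF _ _ SS_inv_rel(2)[OF N S(1,3)], of m x] exp_up[OF _ _ SS_inv_rel(2)[OF N S(2,4)], of m x] F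
    unfolding m_def by (simp add: distrib_left)
  have "thompson (harm_mean X1 X2) (harm_mean Y1 Y2) \<le> ln (exp m)"
    unfolding harm_mean_def
    by (rule hm_bound[OF SS_pd_sum[OF N S'(1,2)] SS_pd_sum[OF N S'(3,4)] l h1 h2])
  then show ?thesis unfolding m_def by simp
qed

theorem lemma10p3:
  fixes n :: nat
  assumes "n \<ge> 1"
  shows "\<exists>\<rho>::real. 0 < \<rho> \<and> \<rho> < 1 \<and>
    (let S = order_interval ((1 / real n) *\<^sub>R (id_blinfun :: 'a::{real_inner,complete_space} \<Rightarrow>\<^sub>L 'a))
                            (real n *\<^sub>R id_blinfun)
     in S \<subseteq> Omega \<and>
        coord_contractive_mean \<rho> S arith_mean \<and> nonexpansive_mean S arith_mean \<and>
        coord_contractive_mean \<rho> S harm_mean \<and> nonexpansive_mean S harm_mean)"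
proof -
  define N where "N = real n"
  have N: "N \<ge> 1" unfolding N_def using assms by simp
  define a where "a = N\<^sup>2"
  have a: "a \<ge> 1" unfolding a_def using N by (simp add: one_le_power)
  define \<rho> where "\<rho> = 1 - 1 / ((N\<^sup>2 + 1) * N\<^sup>2)"
  have p: "2 \<le> (a + 1) * a" using mult_mono[of 2 "a+1" 1 a] a by simp
  have \<rho>: "0 < \<rho>" "\<rho> < 1" unfolding \<rho>_def a_def[symmetric] using p a by (auto simp: field_simps)
  have Seq: "order_interval ((1 / real n) *\<^sub>R (id_blinfun :: 'a \<Rightarrow>\<^sub>L 'a)) (real n *\<^sub>R id_blinfun) = SS N"
    unfolding SS_def N_def ..
  have am_comm: "arith_mean X Y = arith_mean Y X" for X Y :: "'a \<Rightarrow>\<^sub>L 'a"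
    unfolding arith_mean_def by (simp add: add.commute)
  have hm_comm: "harm_mean X Y = harm_mean Y X" for X Y :: "'a \<Rightarrow>\<^sub>L 'a"
    unfolding harm_mean_def by (simp add: add.commute)
  have "SS N \<subseteq> (Omega :: ('a \<Rightarrow>\<^sub>L 'a) set)"
    unfolding Omega_def using SS_facts(5)[OF N] by auto
  moreover have "coord_contractive_mean \<rho> (SS N :: ('a \<Rightarrow>\<^sub>L 'a) set) arith_mean"
    unfolding coord_contractive_mean_def \<rho>_def using am_contr[OF N] am_comm by metis
  moreover have "nonexpansive_mean (SS N :: ('a \<Rightarrow>\<^sub>L 'a) set) arith_mean"
    unfolding nonexpansive_mean_def using am_nonexp[OF N] by blast
  moreover have "coord_contractive_mean \<rho> (SS N :: ('a \<Rightarrow>\<^sub>L 'a) set) harm_mean"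
    unfolding coord_contractive_mean_def \<rho>_def using hm_contr[OF N] hm_comm by metis
  moreover have "nonexpansive_mean (SS N :: ('a \<Rightarrow>\<^sub>L 'a) set) harm_mean"
    unfolding nonexpansive_mean_def using hm_nonexp[OF N] by blast
  ultimately show ?thesis using \<rho> unfolding Seq Let_def by blast
qed


end
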